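(* Let $c\ge2$, let $F$ be a standard $c$-coloring, and let $X_1\ne X_2\in\mathcal X_F$ with $F[X_1]$ monochromatic of color $c_1$ and $F[X_2]$ monochromatic of color $c_2$. Then: (i) if $X_1\cap X_2=\emptyset$, then $c_1=c_2$ and there is a matching $M\subseteq X_1\ast X_2$ such that all edges of $M$ have color $c_1$ and all edges of $(X_1\ast X_2)\setminus M$ have one common color $c_3\neq c_1$; (ii) if $X_1\cap X_2=\{v\}$, then $c_1=c_2$ and all edges of $(X_1\setminus\{v\})\ast(X_2\setminus\{v\})$ have one common color $c_3\neq c_1$; (iii) $|X_1\cap X_2|\ge2$ is impossible.
   Context: A $c$-coloring $F$ is a map from the $2$-subsets of a finite set $V(F)$ to $[c]$. $F$ is standard if it contains no induced copy of any coloring in $\hat K_{3,1}$ or $\hat K_{3,3}$, where: $\hat K_{3,1}$ is the family of $4$-vertex colorings consisting of a monochromatic triangle of color $a$ plus a vertex joined to it by either (two edges of color $a$ and one of color $b\ne a$), or (three edges of three distinct colors, one being $a$), or (two edges of color $b$ and one of color $d$, with $a,b,d$ distinct); $\hat K_{3,3}$ is the family of $6$-vertex colorings consisting of two disjoint triangles monochromatic in colors $a$ and $b$ with all nine edges between them of color $d$, $a,b,d$ distinct. $\mathcal X_F$ is the set of all inclusion-maximal vertex sets of size at least $\max(c+1,6)$ all of whose pairs have the same color. For disjoint $S_1,S_2$, $S_1\ast S_2=\{\{v_1,v_2\}: v_1\in S_1,v_2\in S_2\}$. *)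

theory Defs
  imports Main
begin

text \<open>A c-coloring on vertex set V: a function on 2-subsets with values in {1..c}.
  Values of col on non-2-subsets are irrelevant.\<close>
definition coloring :: "nat \<Rightarrow> 'a set \<Rightarrow> ('a set \<Rightarrow> nat) \<Rightarrow> bool" where
  "coloring c V col \<longleftrightarrow> finite V \<and>
     (\<forall>u\<in>V. \<forall>v\<in>V. u \<noteq> v \<longrightarrow> col {u,v} \<in> {1..c})"

definition has_K31 :: "'a set \<Rightarrow> ('a set \<Rightarrow> nat) \<Rightarrow> bool" where
  "has_K31 V col \<longleftrightarrow> (\<exists>x\<in>V. \<exists>y\<in>V. \<exists>z\<in>V. \<exists>w\<in>V. \<exists>a b d.
     distinct [x,y,z,w] \<and> col {x,y} = a \<and> col {x,z} = a \<and> col {y,z} = a \<and>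
     ((col {w,x} = a \<and> col {w,y} = a \<and> col {w,z} = b \<and> b \<noteq> a) \<or>
      (col {w,x} = a \<and> col {w,y} = b \<and> col {w,z} = d \<and> distinct [a,b,d]) \<or>
      (col {w,x} = b \<and> col {w,y} = b \<and> col {w,z} = d \<and> distinct [a,b,d])))"

definition has_K33 :: "'a set \<Rightarrow> ('a set \<Rightarrow> nat) \<Rightarrow> bool" where
  "has_K33 V col \<longleftrightarrow> (\<exists>x1\<in>V. \<exists>x2\<in>V. \<exists>x3\<in>V. \<exists>y1\<in>V. \<exists>y2\<in>V. \<exists>y3\<in>V. \<exists>a b d.
     distinct [x1,x2,x3,y1,y2,y3] \<and> distinct [a,b,d] \<and>
     col {x1,x2} = a \<and> col {x1,x3} = a \<and> col {x2,x3} = a \<and>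
     col {y1,y2} = b \<and> col {y1,y3} = b \<and> col {y2,y3} = b \<and>
     (\<forall>x\<in>{x1,x2,x3}. \<forall>y\<in>{y1,y2,y3}. col {x,y} = d))"

definition standard :: "nat \<Rightarrow> 'a set \<Rightarrow> ('a set \<Rightarrow> nat) \<Rightarrow> bool" where
  "standard c V col \<longleftrightarrow> coloring c V col \<and> \<not> has_K31 V col \<and> \<not> has_K33 V col"

definition mono_col :: "('a set \<Rightarrow> nat) \<Rightarrow> 'a set \<Rightarrow> nat \<Rightarrow> bool" where
  "mono_col col S k \<longleftrightarrow> (\<forall>u\<in>S. \<forall>v\<in>S. u \<noteq> v \<longrightarrow> col {u,v} = k)"

definition mono :: "('a set \<Rightarrow> nat) \<Rightarrow> 'a set \<Rightarrow> bool" where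
  "mono col S \<longleftrightarrow> (\<exists>k. mono_col col S k)"

definition XF :: "nat \<Rightarrow> 'a set \<Rightarrow> ('a set \<Rightarrow> nat) \<Rightarrow> 'a set set" where
  "XF c V col = {X. X \<subseteq> V \<and> card X \<ge> max (c+1) 6 \<and> mono col X \<and>
      (\<forall>Y. X \<subset> Y \<and> Y \<subseteq> V \<and> card Y \<ge> max (c+1) 6 \<and> mono col Y \<longrightarrow> False)}"

definition star :: "'a set \<Rightarrow> 'a set \<Rightarrow> 'a set set" where
  "star S1 S2 = {{v1, v2} | v1 v2. v1 \<in> S1 \<and> v2 \<in> S2}"

definition matching :: "'a set set \<Rightarrow> bool" where
  "matching M \<longleftrightarrow> (\<forall>e\<in>M. \<forall>f\<in>M. e \<noteq> f \<longrightarrow> e \<inter> f = {})"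

end

theory Submission
  imports Defs
begin


lemma tri:
  assumes nk: "\<not> has_K31 V col" and m: "mono_col col X a" and XV: "X \<subseteq> V"
    and y: "y \<in> V" "y \<notin> X" and p: "p \<in> X" and q: "q \<in> X" and r: "r \<in> X"
    and d: "distinct [p,q,r]"
  shows "\<not>(col{y,p}=a \<and> col{y,q}=a \<and> col{y,r}\<noteq>a)"
    and "\<not>(col{y,p}=a \<and> col{y,q}\<noteq>a \<and> col{y,r}\<noteq>a \<and> col{y,q}\<noteq>col{y,r})"
    and "\<not>(col{y,p}\<noteq>a \<and> col{y,p}=col{y,q} \<and> col{y,r}\<noteq>a \<and> col{y,r}\<noteq>col{y,p})"
proof -
  have e: "col{p,q}=a" "col{p,r}=a" "col{q,r}=a" using m p q r d unfolding mono_col_def by auto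
  have dd: "distinct [p,q,r,y]" using d y p q r by auto
  have V: "p\<in>V" "q\<in>V" "r\<in>V" using XV p q r by auto
  show "\<not>(col{y,p}=a \<and> col{y,q}=a \<and> col{y,r}\<noteq>a)"
  proof
    assume h: "col{y,p}=a \<and> col{y,q}=a \<and> col{y,r}\<noteq>a"
    have "has_K31 V col" unfolding has_K31_def
      apply (rule bexI[of _ p], rule bexI[of _ q], rule bexI[of _ r], rule bexI[of _ y])
      apply (rule exI[of _ a], rule exI[of _ "col{y,r}"], rule exI[of _ a])
      using h e dd V y by simp_all
    with nk show False by simp
  qed
  show "\<not>(col{y,p}=a \<and> col{y,q}\<noteq>a \<and> col{y,r}\<noteq>a \<and> col{y,q}\<noteq>col{y,r})"
  proof
    assume h: "col{y,p}=a \<and> col{y,q}\<noteq>a \<and> col{y,r}\<noteq>a \<and> col{y,q}\<noteq>col{y,r}"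
    have "has_K31 V col" unfolding has_K31_def
      apply (rule bexI[of _ p], rule bexI[of _ q], rule bexI[of _ r], rule bexI[of _ y])
      apply (rule exI[of _ a], rule exI[of _ "col{y,q}"], rule exI[of _ "col{y,r}"])
      using h e dd V y by simp_all
    with nk show False by simp
  qed
  show "\<not>(col{y,p}\<noteq>a \<and> col{y,p}=col{y,q} \<and> col{y,r}\<noteq>a \<and> col{y,r}\<noteq>col{y,p})"
  proof
    assume h: "col{y,p}\<noteq>a \<and> col{y,p}=col{y,q} \<and> col{y,r}\<noteq>a \<and> col{y,r}\<noteq>col{y,p}"
    have "has_K31 V col" unfolding has_K31_def
      apply (rule bexI[of _ p], rule bexI[of _ q], rule bexI[of _ r], rule bexI[of _ y])
      apply (rule exI[of _ a], rule exI[of _ "col{y,p}"], rule exI[of _ "col{y,r}"])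
      using h e dd V y by simp_all
    with nk show False by simp
  qed
qed

lemma avoid: "finite B \<Longrightarrow> card B < card A \<Longrightarrow> \<exists>x\<in>A. x \<notin> B"
  by (meson card_mono not_less subsetI)

lemma card_ins: "card (insert x A) \<le> Suc (card A)"
  by (cases "finite A") (auto simp: card_insert_if)

lemma XF_facts:
  assumes "coloring c V col" "X \<in> XF c V col"
  shows "X \<subseteq> V" "finite X" "card X \<ge> 6" "card X \<ge> c+1"
  using assms unfolding XF_def coloring_def by (auto intro: finite_subset)

lemma XF_max:
  assumes co: "coloring c V col" and X: "X \<in> XF c V col" and XY: "X \<subset> Y" and YV: "Y \<subseteq> V"
    and m: "mono_col col Y a"
  shows False
proof -
  have fV: "finite V" using co unfolding coloring_def by simp
  have "finite Y" using fV YV finite_subset by blast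
  hence "card X \<le> card Y" using XY by (simp add: card_mono)
  moreover have "mono col Y" using m unfolding mono_def by blast
  ultimately show False using X XY YV unfolding XF_def by auto
qed

lemma outside:
  assumes st: "standard c V col" and X: "X \<in> XF c V col" and m: "mono_col col X a"
    and y: "y \<in> V" "y \<notin> X"
  shows "\<exists>b z. b\<noteq>a \<and> (\<forall>x\<in>X. x\<noteq>z \<longrightarrow> col{y,x}=b) \<and> (\<forall>x\<in>X. col{y,x}=a \<or> col{y,x}=b)"
proof -
  have co: "coloring c V col" and nk: "\<not> has_K31 V col" using st unfolding standard_def by auto
  note F = XF_facts[OF co X]
  show ?thesis
  proof (cases "\<exists>x0\<in>X. col{y,x0}=a")
    case True
    then obtain x0 where x0: "x0\<in>X" "col{y,x0}=a" by blast
    have one: "\<forall>x\<in>X. col{y,x}=a \<longrightarrow> x=x0"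
    proof (intro ballI impI, rule ccontr)
      fix x1 assume x1: "x1\<in>X" "col{y,x1}=a" "x1\<noteq>x0"
      have all: "\<forall>r\<in>X. col{y,r}=a"
      proof
        fix r assume r: "r\<in>X"
        show "col{y,r}=a"
        proof (cases "r=x0 \<or> r=x1")
          case True then show ?thesis using x0 x1 by auto
        next
          case False
          have d: "distinct [x0,x1,r]" using x1 False by auto
          show ?thesis using tri(1)[OF nk m F(1) y x0(1) x1(1) r d] x0(2) x1(2) by auto
        qed
      qed
      have "mono_col col (insert y X) a"
        unfolding mono_col_def
      proof (intro ballI impI)
        fix u v assume u: "u \<in> insert y X" and v: "v \<in> insert y X" and uv: "u \<noteq> v"
        show "col{u,v} = a"
        proof (cases "u=y")
          case True then show ?thesis using v uv all by auto
        next
          case False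
          show ?thesis
          proof (cases "v=y")
            case True then show ?thesis using u uv all False by (auto simp: insert_commute)
          next
            case False2: False
            then show ?thesis using u v uv False m unfolding mono_col_def by auto
          qed
        qed
      qed
      then show False using XF_max[OF co X _ _ ] y F(1) by blast
    qed
    have "card {x0} < card X" using F by simp
    then obtain x1 where x1: "x1 \<in> X" "x1 \<notin> {x0}" using avoid[of "{x0}" X] by auto
    define b where "b = col{y,x1}"
    have ba: "b \<noteq> a" using one x1 b_def by auto
    have rest: "\<forall>x\<in>X. x\<noteq>x0 \<longrightarrow> col{y,x}=b"
    proof (intro ballI impI)
      fix x assume x: "x\<in>X" "x\<noteq>x0"
      show "col{y,x}=b"
      proof (cases "x=x1")
        case True then show ?thesis using b_def by simp
      next
        case False
        have n1: "col{y,x} \<noteq> a" using one x by blast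
        have n2: "col{y,x1} \<noteq> a" using one x1 by blast
        have d: "distinct [x0,x1,x]" using x x1 False by auto
        show ?thesis using tri(2)[OF nk m F(1) y x0(1) x1(1) x(1) d] x0(2) n1 n2 b_def by auto
      qed
    qed
    show ?thesis
      apply (rule exI[of _ b], rule exI[of _ x0])
      using ba rest x0 by auto
  next
    case False
    have "\<not> inj_on (\<lambda>x. col{y,x}) X"
    proof
      assume inj: "inj_on (\<lambda>x. col{y,x}) X"
      have cc: "\<forall>u\<in>V. \<forall>v\<in>V. u \<noteq> v \<longrightarrow> col {u,v} \<in> {1..c}" using co unfolding coloring_def by blast
      have "(\<lambda>x. col{y,x}) ` X \<subseteq> {1..c}"
      proof
        fix t assume "t \<in> (\<lambda>x. col{y,x}) ` X"
        then obtain x where x: "x \<in> X" "t = col{y,x}" by blast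
        have "y \<noteq> x" using x y by blast
        then show "t \<in> {1..c}" using cc x y F(1) by blast
      qed
      hence "card X \<le> card {1..c}" using card_inj_on_le[OF inj _ finite_atLeastAtMost] by blast
      then show False using F by simp
    qed
    then obtain p q where pq: "p\<in>X" "q\<in>X" "p\<noteq>q" "col{y,p}=col{y,q}"
      unfolding inj_on_def by auto
    define b where "b = col{y,p}"
    have ba: "b\<noteq>a" using False pq b_def by auto
    have rest: "\<forall>x\<in>X. col{y,x}=b"
    proof
      fix x assume x: "x\<in>X"
      show "col{y,x}=b"
      proof (cases "x=p \<or> x=q")
        case True then show ?thesis using pq b_def by auto
      next
        case F2: False
        have d: "distinct [p,q,x]" using pq F2 by auto
        have n1: "col{y,x} \<noteq> a" "col{y,p} \<noteq> a" using False x pq by auto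
        have "\<not>(col{y,p}\<noteq>a \<and> col{y,p}=col{y,q} \<and> col{y,x}\<noteq>a \<and> col{y,x}\<noteq>col{y,p})"
          by (rule tri(3)[OF nk m F(1) y pq(1) pq(2) x d])
        then show ?thesis using pq(4) n1 unfolding b_def by blast
      qed
    qed
    have "b\<noteq>a \<and> (\<forall>x\<in>X. x\<noteq>p \<longrightarrow> col{y,x}=b) \<and> (\<forall>x\<in>X. col{y,x}=a \<or> col{y,x}=b)"
      using ba rest by blast
    then show ?thesis by blast
  qed
qed



lemma cards: "card {a,b} \<le> 2" "card {a,b,c} \<le> 3" "card {a,b,c,d} \<le> 4" "card {a,b,c,d,e} \<le> 5"
  by (auto simp: card_insert_if)

lemma cm: "col {a,b} = col {b,a}" by (simp add: insert_commute)

lemma notsub: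
  assumes st: "standard c V col" and X1: "X1 \<in> XF c V col" and X2: "X2 \<in> XF c V col"
    and ne: "X1 \<noteq> X2" and m2: "mono_col col X2 c2"
  shows "\<exists>x\<in>X1. x \<notin> X2"
proof (rule ccontr)
  assume "\<not> (\<exists>x\<in>X1. x \<notin> X2)"
  hence "X1 \<subset> X2" using ne by auto
  moreover have co: "coloring c V col" using st unfolding standard_def by auto
  ultimately show False using XF_max[OF co X1 _ _ m2] XF_facts[OF co X2] by blast
qed

lemma part3:
  assumes st: "standard c V col" and X1: "X1 \<in> XF c V col" and X2: "X2 \<in> XF c V col"
    and ne: "X1 \<noteq> X2" and m1: "mono_col col X1 c1" and m2: "mono_col col X2 c2"
  shows "\<not> card (X1 \<inter> X2) \<ge> 2"
proof
  assume h: "card (X1 \<inter> X2) \<ge> 2"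
  have co: "coloring c V col" using st unfolding standard_def by auto
  note F1 = XF_facts[OF co X1] and F2 = XF_facts[OF co X2]
  have "X1 \<inter> X2 \<noteq> {}"
  proof
    assume "X1 \<inter> X2 = {}"
    with h show False by simp
  qed
  then obtain u where u: "u \<in> X1 \<inter> X2" by blast
  have "card {u} < card (X1 \<inter> X2)" using h by simp
  then obtain v where v: "v \<in> X1 \<inter> X2" "v \<notin> {u}" using avoid[of "{u}"] by blast
  have uv: "u \<noteq> v" using v by simp
  have "col{u,v} = c1" using m1 u v uv unfolding mono_col_def by blast
  moreover have "col{u,v} = c2" using m2 u v uv unfolding mono_col_def by blast
  ultimately have c12: "c1 = c2" by simp
  obtain y where y: "y \<in> X2" "y \<notin> X1" using notsub[OF st X2 X1 ne[symmetric] m1] by blast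
  obtain b z where bz: "b\<noteq>c1" "\<forall>x\<in>X1. x\<noteq>z \<longrightarrow> col{y,x}=b"
    using outside[OF st X1 m1 _ y(2)] y F2(1) by blast
  have "col{y,u} = c1" "col{y,v} = c1" using m2 c12 y u v unfolding mono_col_def by auto
  then have "u = z" "v = z" using bz u v by auto
  then show False using v by simp
qed

lemma part2:
  assumes st: "standard c V col" and X1: "X1 \<in> XF c V col" and X2: "X2 \<in> XF c V col"
    and ne: "X1 \<noteq> X2" and m1: "mono_col col X1 c1" and m2: "mono_col col X2 c2"
    and I: "X1 \<inter> X2 = {v}"
  shows "c1 = c2 \<and> (\<exists>c3. c3 \<noteq> c1 \<and> (\<forall>e\<in>star (X1 - {v}) (X2 - {v}). col e = c3))"
proof -
  have co: "coloring c V col" using st unfolding standard_def by auto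
  note F1 = XF_facts[OF co X1] and F2 = XF_facts[OF co X2]
  have v: "v \<in> X1" "v \<in> X2" using I by auto
  have c12: "c1 = c2"
  proof (rule ccontr)
    assume nc: "c1 \<noteq> c2"
    have key: "\<exists>z. \<forall>y\<in>X2. y \<noteq> z \<longrightarrow> col{x,y} = c1" if x: "x \<in> X1" "x \<noteq> v" for x
    proof -
      have xn: "x \<notin> X2" using x I by auto
      obtain b z where bz: "b\<noteq>c2" "\<forall>y\<in>X2. y\<noteq>z \<longrightarrow> col{x,y}=b" "\<forall>y\<in>X2. col{x,y}=c2 \<or> col{x,y}=b"
        using outside[OF st X2 m2 _ xn] x F1(1) by blast
      have "col{x,v} = c1" using m1 x v unfolding mono_col_def by auto
      then have "b = c1" using bz(3) v nc by force
      then show ?thesis using bz by blast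
    qed
    have "card {v} < card X1" using F1 by simp
    then obtain x1 where x1: "x1 \<in> X1" "x1 \<notin> {v}" using avoid[of "{v}"] by blast
    have "card {v,x1} < card X1" using F1 cards(1)[of v x1] by linarith
    then obtain x2 where x2: "x2 \<in> X1" "x2 \<notin> {v,x1}" using avoid[of "{v,x1}"] by blast
    obtain z1 where z1: "\<forall>y\<in>X2. y \<noteq> z1 \<longrightarrow> col{x1,y} = c1" using key x1 by blast
    obtain z2 where z2: "\<forall>y\<in>X2. y \<noteq> z2 \<longrightarrow> col{x2,y} = c1" using key x2 by blast
    have "card {v,z1,z2} < card X2" using F2 cards(2)[of v z1 z2] by linarith
    then obtain y where y: "y \<in> X2" "y \<notin> {v,z1,z2}" using avoid[of "{v,z1,z2}"] by blast
    have yn: "y \<notin> X1" using y I by auto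
    obtain b z where bz: "b\<noteq>c1" "\<forall>x\<in>X1. x\<noteq>z \<longrightarrow> col{y,x}=b"
      using outside[OF st X1 m1 _ yn] y F2(1) by blast
    have "col{y,x1} = c1" "col{y,x2} = c1" using z1 z2 y by (auto simp: cm)
    then have "x1 = z" "x2 = z" using bz x1 x2 by auto
    then show False using x2 by simp
  qed
  have A: "\<exists>b. b \<noteq> c1 \<and> (\<forall>x\<in>X1 - {v}. col{y,x} = b)" if y: "y \<in> X2" "y \<noteq> v" for y
  proof -
    have yn: "y \<notin> X1" using y I by auto
    obtain b z where bz: "b\<noteq>c1" "\<forall>x\<in>X1. x\<noteq>z \<longrightarrow> col{y,x}=b"
      using outside[OF st X1 m1 _ yn] y F2(1) by blast
    have "col{y,v} = c1" using m2 c12 y v unfolding mono_col_def by auto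
    then have "z = v" using bz v by auto
    then show ?thesis using bz by auto
  qed
  have B: "\<exists>b. b \<noteq> c1 \<and> (\<forall>y\<in>X2 - {v}. col{x,y} = b)" if x: "x \<in> X1" "x \<noteq> v" for x
  proof -
    have xn: "x \<notin> X2" using x I by auto
    obtain b z where bz: "b\<noteq>c2" "\<forall>y\<in>X2. y\<noteq>z \<longrightarrow> col{x,y}=b"
      using outside[OF st X2 m2 _ xn] x F1(1) by blast
    have "col{x,v} = c1" using m1 x v unfolding mono_col_def by auto
    then have "z = v" using bz v c12 by auto
    then show ?thesis using bz c12 by auto
  qed
  have "card {v} < card X1" using F1 by simp
  then obtain x0 where x0: "x0 \<in> X1" "x0 \<notin> {v}" using avoid[of "{v}"] by blast
  have "card {v} < card X2" using F2 by simp
  then obtain y0 where y0: "y0 \<in> X2" "y0 \<notin> {v}" using avoid[of "{v}"] by blast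
  have c3: "col{x0,y0} \<noteq> c1" using B[of x0] x0 y0 by auto
  have all: "col{x,y} = col{x0,y0}" if x: "x \<in> X1" "x \<noteq> v" and y: "y \<in> X2" "y \<noteq> v" for x y
  proof -
    obtain b where "\<forall>x\<in>X1 - {v}. col{y,x} = b" using A y by blast
    then have e1: "col{x,y} = col{x0,y}" using x x0 by (auto simp: cm)
    obtain b' where "\<forall>y\<in>X2 - {v}. col{x0,y} = b'" using B x0 by blast
    then have "col{x0,y} = col{x0,y0}" using y y0 by auto
    with e1 show ?thesis by simp
  qed
  have "\<forall>e\<in>star (X1 - {v}) (X2 - {v}). col e = col{x0,y0}"
  proof
    fix e assume "e \<in> star (X1 - {v}) (X2 - {v})"
    then obtain x y where xy: "x \<in> X1" "x \<noteq> v" "y \<in> X2" "y \<noteq> v" "e = {x,y}"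
      unfolding star_def by blast
    then show "col e = col{x0,y0}" using all[of x y] by simp
  qed
  then show ?thesis using c12 c3 by blast
qed



lemma part1:
  assumes st: "standard c V col" and X1: "X1 \<in> XF c V col" and X2: "X2 \<in> XF c V col"
    and m1: "mono_col col X1 c1" and m2: "mono_col col X2 c2"
    and I: "X1 \<inter> X2 = {}"
  shows "c1 = c2 \<and>
            (\<exists>M c3. M \<subseteq> star X1 X2 \<and> matching M \<and> c3 \<noteq> c1 \<and>
               (\<forall>e\<in>M. col e = c1) \<and> (\<forall>e\<in>star X1 X2 - M. col e = c3))"
proof -
  have co: "coloring c V col" and nk3: "\<not> has_K33 V col" using st unfolding standard_def by auto
  note F1 = XF_facts[OF co X1] and F2 = XF_facts[OF co X2]
  have O1: "\<exists>b z. b\<noteq>c2 \<and> (\<forall>y\<in>X2. y\<noteq>z \<longrightarrow> col{x,y}=b) \<and> (\<forall>y\<in>X2. col{x,y}=c2 \<or> col{x,y}=b)"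
    if x: "x \<in> X1" for x
    using outside[OF st X2 m2, of x] x I F1(1) by blast
  have O2: "\<exists>b z. b\<noteq>c1 \<and> (\<forall>x\<in>X1. x\<noteq>z \<longrightarrow> col{x,y}=b) \<and> (\<forall>x\<in>X1. col{x,y}=c1 \<or> col{x,y}=b)"
    if y: "y \<in> X2" for y
  proof -
    have yn: "y \<notin> X1" using y I by blast
    obtain b z where bz: "b\<noteq>c1" "\<forall>x\<in>X1. x\<noteq>z \<longrightarrow> col{y,x}=b" "\<forall>x\<in>X1. col{y,x}=c1 \<or> col{y,x}=b"
      using outside[OF st X1 m1 _ yn] y F2(1) by blast
    have sw: "\<And>x. col{y,x} = col{x,y}" by (rule cm)
    show ?thesis using bz unfolding sw by blast
  qed
  have "\<forall>x\<in>X1. \<exists>p. snd p \<noteq> c2 \<and> (\<forall>y\<in>X2. y\<noteq>fst p \<longrightarrow> col{x,y}=snd p) \<and> (\<forall>y\<in>X2. col{x,y}=c2 \<or> col{x,y}=snd p)"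
  proof
    fix x assume x: "x \<in> X1"
    then obtain b z where bz: "b\<noteq>c2" "\<forall>y\<in>X2. y\<noteq>z \<longrightarrow> col{x,y}=b" "\<forall>y\<in>X2. col{x,y}=c2 \<or> col{x,y}=b"
      using O1 by blast
    show "\<exists>p. snd p \<noteq> c2 \<and> (\<forall>y\<in>X2. y\<noteq>fst p \<longrightarrow> col{x,y}=snd p) \<and> (\<forall>y\<in>X2. col{x,y}=c2 \<or> col{x,y}=snd p)"
      by (rule exI[of _ "(z,b)"]) (simp add: bz)
  qed
  from bchoice[OF this] obtain f where f: "\<forall>x\<in>X1. snd (f x) \<noteq> c2 \<and> (\<forall>y\<in>X2. y\<noteq>fst (f x) \<longrightarrow> col{x,y}=snd (f x)) \<and> (\<forall>y\<in>X2. col{x,y}=c2 \<or> col{x,y}=snd (f x))"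
    by blast
  define B where "B x = snd (f x)" for x
  define Z where "Z x = fst (f x)" for x
  have Bc2: "\<And>x. x \<in> X1 \<Longrightarrow> B x \<noteq> c2" using f B_def by auto
  have BZ: "\<And>x y. x \<in> X1 \<Longrightarrow> y \<in> X2 \<Longrightarrow> y \<noteq> Z x \<Longrightarrow> col{x,y} = B x" using f B_def Z_def by auto
  have BZ2: "\<And>x y. x \<in> X1 \<Longrightarrow> y \<in> X2 \<Longrightarrow> col{x,y} = c2 \<or> col{x,y} = B x" using f B_def by auto
  have c12: "c1 = c2"
  proof (rule ccontr)
    assume nc: "c1 \<noteq> c2"
    define S where "S = {x\<in>X1. B x = c1}"
    have fS: "finite S" using F1 S_def by auto
    have "card S \<le> Suc 0" unfolding card_le_Suc0_iff_eq[OF fS]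
    proof (intro ballI, rule ccontr)
      fix x x' assume x: "x \<in> S" and x': "x' \<in> S" and ne: "x \<noteq> x'"
      have "card {Z x, Z x'} < card X2" using F2 cards(1)[of "Z x" "Z x'"] by linarith
      then obtain y where y: "y \<in> X2" "y \<notin> {Z x, Z x'}" using avoid[of "{Z x, Z x'}"] by blast
      have e: "col{x,y} = c1" "col{x',y} = c1" using BZ x x' y S_def by auto
      obtain b z where bz: "b\<noteq>c1" "\<forall>x\<in>X1. x\<noteq>z \<longrightarrow> col{x,y}=b" using O2 y by blast
      have "x = z" "x' = z" using bz e x x' S_def by auto
      then show False using ne by simp
    qed
    have "card S < card X1" using \<open>card S \<le> Suc 0\<close> F1 by linarith
    then obtain x1 where x1: "x1 \<in> X1" "x1 \<notin> S" using avoid[OF fS] by blast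
    have "card (insert x1 S) < card X1" using \<open>card S \<le> Suc 0\<close> F1 card_ins[of x1 S] by linarith
    then obtain x2 where x2: "x2 \<in> X1" "x2 \<notin> insert x1 S" using avoid[of "insert x1 S"] fS by blast
    have "card (insert x2 (insert x1 S)) < card X1"
      using \<open>card S \<le> Suc 0\<close> F1 card_ins[of x1 S] card_ins[of x2 "insert x1 S"] by linarith
    then obtain x3 where x3: "x3 \<in> X1" "x3 \<notin> insert x2 (insert x1 S)"
      using avoid[of "insert x2 (insert x1 S)"] fS by blast
    have "card {Z x1, Z x2, Z x3} < card X2" using F2 cards(2)[of "Z x1" "Z x2" "Z x3"] by linarith
    then obtain y1 where y1: "y1 \<in> X2" "y1 \<notin> {Z x1, Z x2, Z x3}" using avoid[of "{Z x1, Z x2, Z x3}"] by blast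
    have "card {Z x1, Z x2, Z x3, y1} < card X2" using F2 cards(3)[of "Z x1" "Z x2" "Z x3" y1] by linarith
    then obtain y2 where y2: "y2 \<in> X2" "y2 \<notin> {Z x1, Z x2, Z x3, y1}" using avoid[of "{Z x1, Z x2, Z x3, y1}"] by blast
    have "card {Z x1, Z x2, Z x3, y1, y2} < card X2" using F2 cards(4)[of "Z x1" "Z x2" "Z x3" y1 y2] by linarith
    then obtain y3 where y3: "y3 \<in> X2" "y3 \<notin> {Z x1, Z x2, Z x3, y1, y2}"
      using avoid[of "{Z x1, Z x2, Z x3, y1, y2}"] by blast
    obtain b z where bz: "b\<noteq>c1" "\<forall>x\<in>X1. col{x,y1}=c1 \<or> col{x,y1}=b" using O2 y1 by blast
    have Bb: "B x1 = b" "B x2 = b" "B x3 = b"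
      using BZ[OF x1(1) y1(1)] BZ[OF x2(1) y1(1)] BZ[OF x3(1) y1(1)] bz x1 x2 x3 y1 S_def by auto
    have ed: "col{x,y} = b" if "x \<in> {x1,x2,x3}" "y \<in> {y1,y2,y3}" for x y
      using that BZ x1 x2 x3 y1 y2 y3 Bb by auto
    have db: "b \<noteq> c2" using Bc2[OF x1(1)] Bb by simp
    have "has_K33 V col" unfolding has_K33_def
      apply (rule bexI[of _ x1], rule bexI[of _ x2], rule bexI[of _ x3])
         apply (rule bexI[of _ y1], rule bexI[of _ y2], rule bexI[of _ y3])
            apply (rule exI[of _ c1], rule exI[of _ c2], rule exI[of _ b])
      using ed x1 x2 x3 y1 y2 y3 I F1(1) F2(1) m1 m2 nc bz(1) db unfolding mono_col_def
      by (auto simp del: insert_iff)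
    with nk3 show False by simp
  qed
  have U1: "y = y'" if "x \<in> X1" "y \<in> X2" "y' \<in> X2" "col{x,y} = c1" "col{x,y'} = c1" for x y y'
    using BZ[of x y] BZ[of x y'] Bc2[of x] that c12 by metis
  have U2: "x = x'" if h: "x \<in> X1" "x' \<in> X1" "y \<in> X2" "col{x,y} = c1" "col{x',y} = c1" for x x' y
  proof -
    obtain b z where bz: "b\<noteq>c1" "\<forall>x\<in>X1. x\<noteq>z \<longrightarrow> col{x,y}=b" using O2 h(3) by blast
    then show ?thesis using h by metis
  qed
  obtain x0 where x0: "x0 \<in> X1" using F1 by fastforce
  have Bconst: "B x = B x0" if x: "x \<in> X1" for x
  proof -
    have "card {Z x, Z x0} < card X2" using F2 cards(1)[of "Z x" "Z x0"] by linarith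
    then obtain y where y: "y \<in> X2" "y \<notin> {Z x, Z x0}" using avoid[of "{Z x, Z x0}"] by blast
    obtain b z where bz: "b\<noteq>c1" "\<forall>x\<in>X1. col{x,y}=c1 \<or> col{x,y}=b" using O2 y by blast
    have "col{x,y} = B x" "col{x0,y} = B x0" using BZ x x0 y by auto
    then show ?thesis using bz x x0 Bc2[OF x] Bc2[OF x0] c12 by metis
  qed
  define M where "M = {e\<in>star X1 X2. col e = c1}"
  have match: "matching M" unfolding matching_def
  proof (intro ballI impI)
    fix e g assume e: "e \<in> M" and g: "g \<in> M" and ne: "e \<noteq> g"
    obtain x y where xy: "x \<in> X1" "y \<in> X2" "e = {x,y}" "col{x,y} = c1" using e unfolding M_def star_def by auto
    obtain x' y' where xy': "x' \<in> X1" "y' \<in> X2" "g = {x',y'}" "col{x',y'} = c1" using g unfolding M_def star_def by auto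
    show "e \<inter> g = {}"
    proof (rule ccontr)
      assume "e \<inter> g \<noteq> {}"
      then have "x = x' \<or> y = y'" using xy xy' I by auto
      then show False
      proof
        assume "x = x'" then show False using U1[of x y y'] xy xy' ne by auto
      next
        assume "y = y'" then show False using U2[of x x' y] xy xy' ne by auto
      qed
    qed
  qed
  have rest: "col e = B x0" if he: "e \<in> star X1 X2 - M" for e
  proof -
    obtain x y where xy: "x \<in> X1" "y \<in> X2" "e = {x,y}" "col{x,y} \<noteq> c1"
      using he unfolding M_def star_def by auto
    then show ?thesis using BZ2[of x y] Bconst[of x] c12 by auto
  qed
  have Ms: "M \<subseteq> star X1 X2" unfolding M_def by blast
  have Mc: "\<forall>e\<in>M. col e = c1" unfolding M_def by blast
  have R: "\<forall>e\<in>star X1 X2 - M. col e = B x0" using rest by blast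
  have nb: "B x0 \<noteq> c1" using Bc2[OF x0] c12 by simp
  have "M \<subseteq> star X1 X2 \<and> matching M \<and> B x0 \<noteq> c1 \<and>
               (\<forall>e\<in>M. col e = c1) \<and> (\<forall>e\<in>star X1 X2 - M. col e = B x0)"
    using Ms match nb Mc R by blast
  then show ?thesis using c12 by blast
qed

theorem claim5p4:
  fixes c :: nat and V :: "'a set" and col :: "'a set \<Rightarrow> nat"
    and X1 X2 :: "'a set" and c1 c2 :: nat
  assumes "c \<ge> 2"
    and "standard c V col"
    and "X1 \<in> XF c V col" and "X2 \<in> XF c V col" and "X1 \<noteq> X2"
    and "mono_col col X1 c1" and "mono_col col X2 c2"
  shows "(X1 \<inter> X2 = {} \<longrightarrow> c1 = c2 \<and>
            (\<exists>M c3. M \<subseteq> star X1 X2 \<and> matching M \<and> c3 \<noteq> c1 \<and>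
               (\<forall>e\<in>M. col e = c1) \<and> (\<forall>e\<in>star X1 X2 - M. col e = c3)))
       \<and> (\<forall>v. X1 \<inter> X2 = {v} \<longrightarrow> c1 = c2 \<and>
            (\<exists>c3. c3 \<noteq> c1 \<and> (\<forall>e\<in>star (X1 - {v}) (X2 - {v}). col e = c3)))
       \<and> \<not> card (X1 \<inter> X2) \<ge> 2"
  proof -
  have p1: "X1 \<inter> X2 = {} \<longrightarrow> c1 = c2 \<and>
            (\<exists>M c3. M \<subseteq> star X1 X2 \<and> matching M \<and> c3 \<noteq> c1 \<and>
               (\<forall>e\<in>M. col e = c1) \<and> (\<forall>e\<in>star X1 X2 - M. col e = c3))"
    using part1[OF assms(2,3,4,6,7)] by blast
  have p2: "\<forall>v. X1 \<inter> X2 = {v} \<longrightarrow> c1 = c2 \<and>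
            (\<exists>c3. c3 \<noteq> c1 \<and> (\<forall>e\<in>star (X1 - {v}) (X2 - {v}). col e = c3))"
    using part2[OF assms(2,3,4,5,6,7)] by blast
  have p3: "\<not> card (X1 \<inter> X2) \<ge> 2" by (rule part3[OF assms(2,3,4,5,6,7)])
  show ?thesis using p1 p2 p3 by blast
qed

end
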